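(* Let $\varepsilon>0$ be sufficiently small, $n$ a positive integer, $v$ a binary string, and $r_1>r_2>\dots>r_k$ positive integers with $r_j\ge r_{j+1}/\varepsilon^4$ for all $j$, such that $l_j=\varepsilon^2r_j$ are integers, $l_1\mid |v|$, $l_{j+1}\mid l_j$, and $\mathrm{adv}(v,A_{r_j,n})\ge\varepsilon/2$ for every $j=1,\dots,k$. Let $v_0=v$ and for $j=1,\dots,k$ let $v_j$ be chosen uniformly at random among the consecutive non-overlapping length-$l_j$ substrings into which $v_{j-1}$ is split, and let $B_j=\mathrm{bias}(v_j)$. Then $\mathrm{Var}(B_{i+1})\ge\mathrm{Var}(B_i)+\frac{\varepsilon^3}{1200}$ for all $1\le i<k$.
   Context: For a binary string $w$, $\mathrm{bias}(w)=\frac{\mathrm{count}_1(w)-\mathrm{count}_0(w)}{|w|}$, where $\mathrm{count}_a(w)$ is the number of occurrences of symbol $a$ in $w$. A matching $M$ between strings $a,b$ is a pair of increasing index sequences in $a$ and $b$ of equal length $|M|$ matching equal symbols; $\mathrm{adv}_M(a,b)=\frac{3|M|-|a|-|b|}{|a|}$ and $\mathrm{adv}(a,b)=\max_M\mathrm{adv}_M(a,b)$. $A_{r,n}$ is the length-$n$ prefix of $(0^r1^r)^\infty$. *)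

theory Defs
  imports "HOL-Probability.Probability"
begin

text \<open>Binary strings are bool lists; True encodes symbol 1, False encodes symbol 0.\<close>

definition count1 :: "bool list \<Rightarrow> nat" where
  "count1 w = length (filter (\<lambda>x. x) w)"

definition count0 :: "bool list \<Rightarrow> nat" where
  "count0 w = length (filter (\<lambda>x. \<not> x) w)"

definition bias :: "bool list \<Rightarrow> real" where
  "bias w = (real (count1 w) - real (count0 w)) / real (length w)"

definition matchings :: "bool list \<Rightarrow> bool list \<Rightarrow> (nat \<times> nat) list set" where
  "matchings a b = {M. sorted_wrt (\<lambda>p q. fst p < fst q \<and> snd p < snd q) M \<and>
      (\<forall>(i, j) \<in> set M. i < length a \<and> j < length b \<and> a ! i = b ! j)}"

definition adv_M :: "(nat \<times> nat) list \<Rightarrow> bool list \<Rightarrow> bool list \<Rightarrow> real" where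
  "adv_M M a b = (3 * real (length M) - real (length a) - real (length b)) / real (length a)"

definition adv :: "bool list \<Rightarrow> bool list \<Rightarrow> real" where
  "adv a b = Max ((\<lambda>M. adv_M M a b) ` matchings a b)"

text \<open>A r n: the length-n prefix of (0^r 1^r)^\<infinity>.\<close>

definition A :: "nat \<Rightarrow> nat \<Rightarrow> bool list" where
  "A r n = map (\<lambda>i. odd (i div r)) [0..<n]"

definition split_unif :: "nat \<Rightarrow> bool list \<Rightarrow> bool list pmf" where
  "split_unif l w = map_pmf (\<lambda>t. take l (drop (t * l) w)) (pmf_of_set {..<length w div l})"

primrec vdist :: "(nat \<Rightarrow> nat) \<Rightarrow> bool list \<Rightarrow> nat \<Rightarrow> bool list pmf" where
  "vdist l v 0 = return_pmf v"
| "vdist l v (Suc j) = bind_pmf (vdist l v j) (split_unif (l (Suc j)))"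

end

theory Submission
  imports Defs
begin

definition blk :: "nat \<Rightarrow> bool list \<Rightarrow> nat \<Rightarrow> bool list" where
  "blk m v t = take m (drop (t*m) v)"

definition cnt :: "bool list \<Rightarrow> bool \<Rightarrow> nat set \<Rightarrow> nat" where
  "cnt v s S = card {i\<in>S. v!i = s}"

lemma count1_take_drop:
  assumes "a + m \<le> length v"
  shows "count1 (take m (drop a v)) = cnt v True {a..<a+m}"
proof -
  let ?w = "take m (drop a v)"
  have lw: "length ?w = m" using assms by simp
  have "count1 ?w = card {i. i < length ?w \<and> ?w ! i}"
    unfolding count1_def by (simp add: length_filter_conv_card)
  also have "{i. i < length ?w \<and> ?w ! i} = {i. i < m \<and> v ! (a+i)}"
    using assms lw by auto
  also have "card \<dots> = card ((\<lambda>i. a + i) ` {i. i < m \<and> v ! (a+i)})"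
    by (simp add: card_image)
  also have "(\<lambda>i. a + i) ` {i. i < m \<and> v ! (a+i)} = {i\<in>{a..<a+m}. v!i = True}"
  proof (rule set_eqI, rule iffI)
    fix x assume "x \<in> {i\<in>{a..<a+m}. v!i = True}"
    then show "x \<in> (\<lambda>i. a + i) ` {i. i < m \<and> v ! (a+i)}"
      by (auto intro!: image_eqI[of x _ "x - a"])
  qed auto
  finally show ?thesis unfolding cnt_def .
qed

lemma count01: "count0 w + count1 w = length w"
  unfolding count0_def count1_def using sum_length_filter_compl[of "\<lambda>x. x" w] by simp

lemma bias_take_drop:
  assumes "a + m \<le> length v" "0 < m"
  shows "bias (take m (drop a v)) = (2 * real (cnt v True {a..<a+m}) - m) / m"
proof -
  have "length (take m (drop a v)) = m" using assms by simp
  with count01[of "take m (drop a v)"] count1_take_drop[OF assms(1)]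
  show ?thesis unfolding bias_def by (simp add: of_nat_diff)
qed



lemma uniform_split:
  fixes q T :: nat
  assumes "0 < q" "0 < T"
  shows "bind_pmf (pmf_of_set {..<T}) (\<lambda>t. map_pmf (\<lambda>u. f (t*q+u)) (pmf_of_set {..<q}))
         = map_pmf f (pmf_of_set {..<T*q})"
proof -
  have U: "{..<T*q} = (\<Union>t\<in>{..<T}. {t*q..<t*q+q})"
  proof (rule set_eqI, rule iffI)
    fix x assume "x \<in> {..<T*q}"
    then have "x div q < T" "x div q * q \<le> x" "x < x div q * q + q"
      using assms by (auto simp: less_mult_imp_div_less) (metis add.commute div_mult_mod_eq mod_less_divisor mult.commute nat_add_left_cancel_less)
    then show "x \<in> (\<Union>t\<in>{..<T}. {t*q..<t*q+q})" by (auto intro!: bexI[of _ "x div q"])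
  next
    fix x assume "x \<in> (\<Union>t\<in>{..<T}. {t*q..<t*q+q})"
    then obtain t where "t < T" "x < t*q+q" by auto
    then have "t*q + q \<le> T*q" by (metis Suc_leI add.commute mult_Suc mult_le_mono1)
    with \<open>x < t*q+q\<close> show "x \<in> {..<T*q}" by simp
  qed
  have disj: "disjoint_family_on (\<lambda>t. {t*q..<t*q+q}) {..<T}"
    unfolding disjoint_family_on_def
  proof (intro ballI impI)
    fix a b :: nat assume "a \<noteq> b"
    show "{a*q..<a*q+q} \<inter> {b*q..<b*q+q} = {}"
    proof (cases "a < b")
      case True
      then have "a*q + q \<le> b*q" by (metis Suc_leI add.commute mult_Suc mult_le_mono1)
      then show ?thesis by auto
    next
      case False
      then have "b < a" using \<open>a\<noteq>b\<close> by simp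
      then have "b*q + q \<le> a*q" by (metis Suc_leI add.commute mult_Suc mult_le_mono1)
      then show ?thesis by auto
    qed
  qed
  have "pmf_of_set {..<T*q} = bind_pmf (pmf_of_set {..<T}) (\<lambda>t. pmf_of_set {t*q..<t*q+q})"
    unfolding U by (rule pmf_of_set_UN) (use assms disj in auto)
  then have "map_pmf f (pmf_of_set {..<T*q}) = bind_pmf (pmf_of_set {..<T}) (\<lambda>t. map_pmf f (pmf_of_set {t*q..<t*q+q}))"
    by (simp add: map_bind_pmf)
  also have "\<dots> = bind_pmf (pmf_of_set {..<T}) (\<lambda>t. map_pmf (\<lambda>u. f (t*q+u)) (pmf_of_set {..<q}))"
  proof (rule bind_pmf_cong[OF refl])
    fix t
    have "map_pmf (\<lambda>u. f (t*q+u)) (pmf_of_set {..<q}) = map_pmf f (map_pmf (\<lambda>u. t*q+u) (pmf_of_set {..<q}))"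
      by (simp add: pmf.map_comp o_def)
    also have "map_pmf (\<lambda>u. t*q+u) (pmf_of_set {..<q}) = pmf_of_set ((\<lambda>u. t*q+u) ` {..<q})"
      by (rule map_pmf_of_set_inj) (use assms in auto)
    also have "(\<lambda>u. t*q+u) ` {..<q} = {t*q..<t*q+q}"
    proof (rule set_eqI, rule iffI)
      fix x assume "x \<in> {t*q..<t*q+q}" then show "x \<in> (\<lambda>u. t*q+u) ` {..<q}"
        by (auto intro!: image_eqI[of x _ "x - t*q"])
    qed auto
    finally show "map_pmf f (pmf_of_set {t*q..<t*q+q}) = map_pmf (\<lambda>u. f (t*q+u)) (pmf_of_set {..<q})" by simp
  qed
  finally show ?thesis by simp
qed

lemma blk_blk:
  assumes "u < q" "L = q * m"
  shows "take m (drop (u*m) (blk L v t)) = blk m v (t*q+u)"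
proof -
  have "u*m + m \<le> L" using assms by (metis Suc_leI add.commute mult_Suc mult_le_mono1 mult.commute)
  then have "take m (drop (u*m) (take L (drop (t*L) v))) = take m (drop (u*m) (drop (t*L) v))"
    by (simp add: take_drop min_def)
  also have "\<dots> = take m (drop ((t*q+u)*m) v)"
    using assms by (simp add: algebra_simps)
  finally show ?thesis unfolding blk_def .
qed

lemma length_blk: "(t+1)*m \<le> length v \<Longrightarrow> length (blk m v t) = m"
  unfolding blk_def by simp

lemma vdist_struct:
  assumes pos: "\<forall>j\<in>{1..k}. 0 < l j"
    and d1: "l 1 dvd length v"
    and dS: "\<forall>j\<in>{1..<k}. l (Suc j) dvd l j"
    and j: "1 \<le> j" "j \<le> k" and vpos: "0 < length v"
  shows "vdist l v j = map_pmf (blk (l j) v) (pmf_of_set {..<length v div l j}) \<and> l j dvd length v"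
  using j
proof (induction j)
  case 0 then show ?case by simp
next
  case (Suc j)
  show ?case
  proof (cases "j = 0")
    case True
    then show ?thesis using d1 by (simp add: split_unif_def blk_def[abs_def] bind_return_pmf)
  next
    case False
    then have IH: "vdist l v j = map_pmf (blk (l j) v) (pmf_of_set {..<length v div l j})"
      and dj: "l j dvd length v" using Suc by auto
    have dd: "l (Suc j) dvd l j" using dS Suc False by auto
    define L where "L = l j"
    define m where "m = l (Suc j)"
    define q where "q = L div m"
    define T where "T = length v div L"
    have mpos: "0 < m" unfolding m_def using pos Suc by auto
    have Lpos: "0 < L" unfolding L_def using pos Suc False by auto
    have Lq: "L = q * m" unfolding q_def using dd m_def L_def by simp
    have qpos: "0 < q" using Lq Lpos by (cases q) auto
    have NT: "length v = T * L" unfolding T_def using dj L_def by simp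
    have Tpos: "0 < T" using NT vpos by (cases T) auto
    have dm: "m dvd length v" using dd dj m_def by (metis dvd_trans)
    have Tq: "length v div m = T * q" using NT Lq mpos by simp
    have "vdist l v (Suc j) = bind_pmf (map_pmf (blk L v) (pmf_of_set {..<T})) (split_unif m)"
      using IH by (simp add: L_def T_def m_def)
    also have "\<dots> = bind_pmf (pmf_of_set {..<T}) (\<lambda>t. split_unif m (blk L v t))"
      by (simp add: bind_map_pmf)
    also have "\<dots> = bind_pmf (pmf_of_set {..<T}) (\<lambda>t. map_pmf (\<lambda>u. blk m v (t*q+u)) (pmf_of_set {..<q}))"
    proof (rule bind_pmf_cong[OF refl])
      fix t assume "t \<in> set_pmf (pmf_of_set {..<T})"
      have "0 < T" using NT vpos by (cases T) auto
      with \<open>t \<in> set_pmf (pmf_of_set {..<T})\<close> have "t < T" by (subst (asm) set_pmf_of_set) auto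
      then have "(t+1)*L \<le> length v" using NT by (metis Suc_eq_plus1 Suc_leI mult_le_mono1)
      then have "length (blk L v t) = L" by (rule length_blk)
      then show "split_unif m (blk L v t) = map_pmf (\<lambda>u. blk m v (t*q+u)) (pmf_of_set {..<q})"
        unfolding split_unif_def
      proof (intro map_pmf_cong)
        show "pmf_of_set {..<length (blk L v t) div m} = pmf_of_set {..<q}"
          using \<open>length (blk L v t) = L\<close> q_def by simp
      next
        fix u assume "u \<in> set_pmf (pmf_of_set {..<q})"
        then have "u < q" using qpos by (subst (asm) set_pmf_of_set) auto
        then show "take m (drop (u * m) (blk L v t)) = blk m v (t * q + u)"
          by (rule blk_blk[OF _ Lq])
      qed
    qed
    also have "\<dots> = map_pmf (blk m v) (pmf_of_set {..<T*q})"
      by (rule uniform_split) (use qpos Tpos in \<open>auto\<close>)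
    finally show ?thesis using Tq dm m_def by simp
  qed
qed



lemma var_uniform:
  fixes X :: "'a \<Rightarrow> real" and T :: nat
  assumes "0 < T"
  shows "measure_pmf.variance (map_pmf f (pmf_of_set {..<T})) X
     = (\<Sum>t<T. (X (f t) - (\<Sum>t<T. X (f t)) / T)^2) / T"
proof -
  have ne: "{..<T} \<noteq> {}" using assms by auto
  have E: "measure_pmf.expectation (map_pmf f (pmf_of_set {..<T})) X = (\<Sum>t<T. X (f t)) / T"
    using integral_pmf_of_set[OF ne] by simp
  show ?thesis unfolding E using integral_pmf_of_set[OF ne] by simp
qed

lemma sum_blocks:
  fixes g :: "nat \<Rightarrow> real"
  shows "(\<Sum>t<T*q. g t) = (\<Sum>s<T. \<Sum>u<q. g (s*q+u))"
proof (induction T)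
  case 0 then show ?case by simp
next
  case (Suc T)
  have "(\<Sum>t<Suc T*q. g t) = (\<Sum>t<T*q. g t) + (\<Sum>t\<in>{T*q..<T*q+q}. g t)"
    by (simp add: add.commute sum.atLeastLessThan_concat[symmetric] atLeast0LessThan[symmetric])
  also have "(\<Sum>t\<in>{T*q..<T*q+q}. g t) = (\<Sum>u<q. g (T*q+u))"
    using sum.shift_bounds_nat_ivl[of g 0 "T*q" q] by (simp add: atLeast0LessThan add.commute)
  finally show ?case using Suc by simp
qed

lemma var_decomp:
  fixes \<beta> :: "nat \<Rightarrow> real" and T q :: nat
  assumes "0 < T" "0 < q"
  defines "\<mu> \<equiv> \<lambda>s. (\<Sum>u<q. \<beta> (s*q+u)) / q"
  shows "(\<Sum>t<T*q. (\<beta> t - (\<Sum>t<T*q. \<beta> t)/(T*q))^2)/(T*q)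
      = (\<Sum>s<T. (\<mu> s - (\<Sum>s<T. \<mu> s)/T)^2)/T + (\<Sum>t<T*q. (\<beta> t - \<mu> (t div q))^2)/(T*q)"
proof -
  have qn: "real q \<noteq> 0" "real T \<noteq> 0" using assms by auto
  have S: "(\<Sum>t<T*q. \<beta> t) = q * (\<Sum>s<T. \<mu> s)"
  proof -
    have "q * (\<Sum>s<T. \<mu> s) = (\<Sum>s<T. q * \<mu> s)" by (simp add: sum_distrib_left)
    also have "\<dots> = (\<Sum>s<T. \<Sum>u<q. \<beta> (s*q+u))" unfolding \<mu>_def using qn by simp
    finally show ?thesis unfolding sum_blocks by simp
  qed
  define m where "m = (\<Sum>s<T. \<mu> s)/T"
  have m: "(\<Sum>t<T*q. \<beta> t)/(T*q) = m" unfolding m_def S using qn by simp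
  have zero: "(\<Sum>u<q. \<beta> (s*q+u) - \<mu> s) = 0" for s
    unfolding sum_subtractf \<mu>_def using qn by simp
  have dv: "(s*q+u) div q = s" if "u < q" for s u using that assms by simp
  have blk: "(\<Sum>u<q. (\<beta> (s*q+u) - m)^2) = (\<Sum>u<q. (\<beta> (s*q+u) - \<mu> s)^2) + q * (\<mu> s - m)^2" for s
  proof -
    have "(\<Sum>u<q. (\<beta> (s*q+u) - m)^2) = (\<Sum>u<q. (\<beta> (s*q+u) - \<mu> s)^2 + 2*(\<mu> s - m)*(\<beta> (s*q+u) - \<mu> s) + (\<mu> s - m)^2)"
      by (rule sum.cong) (auto simp: power2_eq_square algebra_simps)
    also have "\<dots> = (\<Sum>u<q. (\<beta> (s*q+u) - \<mu> s)^2) + 2*(\<mu> s - m)*(\<Sum>u<q. \<beta> (s*q+u) - \<mu> s) + q*(\<mu> s - m)^2"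
      by (simp add: sum.distrib sum_distrib_left)
    finally show ?thesis using zero by simp
  qed
  have "(\<Sum>t<T*q. (\<beta> t - m)^2) = (\<Sum>t<T*q. (\<beta> t - \<mu> (t div q))^2) + q * (\<Sum>s<T. (\<mu> s - m)^2)"
    unfolding sum_blocks blk using dv by (simp add: sum.distrib sum_distrib_left)
  then show ?thesis unfolding m m_def[symmetric] using qn by (simp add: field_simps)
qed


lemma pair_ineq:
  fixes a u0 u1 x0 x1 r :: real
  assumes "0 \<le> a" "a \<le> 1" "0 \<le> u0" "0 \<le> u1" "u0 \<le> r" "u1 \<le> r" "u0 \<le> a*x0" "u1 \<le> (1-a)*x1"
    "0 \<le> x0" "0 \<le> x1"
  shows "3*u0 - x0 - r + 3*u1 - x1 - r \<le> 0"
proof (cases "a = 0 \<or> a = 1")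
  case True
  then show ?thesis
  proof
    assume "a = 0" then have "u0 = 0" using assms by simp
    moreover have "u1 \<le> x1" using assms \<open>a = 0\<close> by simp
    ultimately show ?thesis using assms by linarith
  next
    assume "a = 1" then have "u1 = 0" using assms by simp
    moreover have "u0 \<le> x0" using assms \<open>a = 1\<close> by simp
    ultimately show ?thesis using assms by linarith
  qed
next
  case False
  then have a0: "0 < a" and a1: "a < 1" using assms by auto
  define b where "b = 1 - a"
  have b0: "0 < b" using a1 b_def by simp
  have x0: "u0 / a \<le> x0" using assms(7) a0 by (simp add: pos_divide_le_eq mult.commute)
  have x1: "u1 / b \<le> x1" using assms(8) b0 b_def by (simp add: pos_divide_le_eq mult.commute)
  have sq: "0 \<le> (a - 1/2)^2" by simp
  have ab: "a * b \<le> 1/4" unfolding b_def using sq by (simp add: power2_eq_square algebra_simps)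
  have inv: "1/a + 1/b \<ge> 4"
  proof -
    have "1/a + 1/b = 1/(a*b)" using a0 b0 b_def by (simp add: field_simps)
    also have "\<dots> \<ge> 4" using ab a0 b0 by (simp add: field_simps)
    finally show ?thesis .
  qed
  have e0: "3*u0 - x0 \<le> u0 * (3 - 1/a)" using x0 by (simp add: algebra_simps)
  have e1: "3*u1 - x1 \<le> u1 * (3 - 1/b)" using x1 by (simp add: algebra_simps)
  have m0: "u0 * (3 - 1/a) \<le> r * max 0 (3 - 1/a)"
    using assms(3,5) by (cases "3 - 1/a \<ge> 0") (auto intro: mult_mono mult_nonneg_nonpos)
  have m1: "u1 * (3 - 1/b) \<le> r * max 0 (3 - 1/b)"
    using assms(4,6) by (cases "3 - 1/b \<ge> 0") (auto intro: mult_mono mult_nonneg_nonpos)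
  have la: "1/a \<ge> 1" using a0 a1 by simp
  have lb: "1/b \<ge> 1" using b0 b_def a0 by simp
  have "max 0 (3 - 1/a) + max 0 (3 - 1/b) \<le> 2" using inv la lb by linarith
  then have "r * max 0 (3 - 1/a) + r * max 0 (3 - 1/b) \<le> 2 * r"
    using assms(3,5) by (metis distrib_left mult.commute mult_right_mono order_trans)
  then show ?thesis using e0 e1 m0 m1 by linarith
qed

lemma pair_ineq2:
  fixes a u0 u1 x0 x1 r e0 e1 :: real
  assumes "0 \<le> a" "a \<le> 1" "0 \<le> u0" "0 \<le> u1" "u0 \<le> r" "u1 \<le> r" "u0 \<le> a*x0 + e0" "u1 \<le> (1-a)*x1 + e1"
    "0 \<le> x0" "0 \<le> x1" "0 \<le> e0" "0 \<le> e1"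
  shows "3*u0 - x0 - r + 3*u1 - x1 - r \<le> 3*(e0 + e1)"
proof -
  define w0 where "w0 = min u0 (a*x0)"
  define w1 where "w1 = min u1 ((1-a)*x1)"
  have "3*w0 - x0 - r + 3*w1 - x1 - r \<le> 0"
    by (rule pair_ineq[of a]) (use assms in \<open>auto simp: w0_def w1_def\<close>)
  moreover have "u0 \<le> w0 + e0" "u1 \<le> w1 + e1" using assms unfolding w0_def w1_def by (auto simp: min_def)
  ultimately show ?thesis by (simp add: algebra_simps)
qed

definition ind :: "bool list \<Rightarrow> bool \<Rightarrow> nat \<Rightarrow> real" where
  "ind v s i = (if v!i = s then 1 else 0)"

lemma cnt_sum: "finite S \<Longrightarrow> real (cnt v s S) = (\<Sum>i\<in>S. ind v s i)"
  unfolding cnt_def ind_def by (simp add: sum.If_cases Int_def conj_commute)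

lemma ind_01: "0 \<le> ind v s i" "ind v s i \<le> 1" "ind v False i = 1 - ind v True i"
  unfolding ind_def by auto

lemma sum_ivl_blocks:
  fixes g :: "nat \<Rightarrow> real"
  assumes "a \<le> b"
  shows "(\<Sum>i\<in>{a*l..<b*l}. g i) = (\<Sum>t\<in>{a..<b}. \<Sum>i\<in>{t*l..<t*l+l}. g i)"
  using assms
proof (induction b)
  case 0 then show ?case by simp
next
  case (Suc b)
  show ?case
  proof (cases "a = Suc b")
    case True then show ?thesis by simp
  next
    case False
    then have ab: "a \<le> b" using Suc by simp
    have "(\<Sum>i\<in>{a*l..<Suc b*l}. g i) = (\<Sum>i\<in>{a*l..<b*l}. g i) + (\<Sum>i\<in>{b*l..<b*l+l}. g i)"
      using ab by (simp add: add.commute sum.atLeastLessThan_concat[symmetric] mult_le_mono1)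
    also have "\<dots> = (\<Sum>t\<in>{a..<b}. \<Sum>i\<in>{t*l..<t*l+l}. g i) + (\<Sum>i\<in>{b*l..<b*l+l}. g i)"
      using Suc.IH ab by simp
    also have "\<dots> = (\<Sum>t\<in>{a..<Suc b}. \<Sum>i\<in>{t*l..<t*l+l}. g i)"
      using ab by simp
    finally show ?thesis .
  qed
qed


lemma sum_ind_le: "(\<Sum>i\<in>{a..<b}. ind v s i) \<le> real b - real a" if "a \<le> b"
proof -
  have "(\<Sum>i\<in>{a..<b}. ind v s i) \<le> of_nat (card {a..<b}) * 1"
    by (rule sum_bounded_above) (simp add: ind_01)
  then show ?thesis using that by simp
qed

locale core =
  fixes v :: "bool list" and r n l L q :: nat and M :: "(nat \<times> nat) list"
  assumes lpos: "0 < l" and rpos: "0 < r" and Lq: "L = q*l" and qpos: "0 < q"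
    and LdvN: "L dvd length v" and Mm: "M \<in> matchings v (A r n)"
begin

definition c where "c t = cnt v True {t*l..<t*l+l}"
definition C where "C s = cnt v True {s*L..<s*L+L}"
definition d where "d t = \<bar>real (c t) - real l * real (C (t div q)) / real L\<bar>"
definition fr where "fr sg s = (if sg then real (C s)/L else 1 - real (C s)/L)"
definition F where "F lo hi = {(lo+l-1) div l ..< (hi+1) div l}"

lemma Lpos: "0 < L" using Lq lpos qpos by simp

lemma C_le: "C s \<le> L"
proof -
  have "C s \<le> card {s*L..<s*L+L}" unfolding C_def cnt_def by (rule card_mono) auto
  then show ?thesis by simp
qed

lemma fr_01: "0 \<le> fr sg s" "fr sg s \<le> 1"
  using C_le[of s] Lpos unfolding fr_def by (auto simp: field_simps)

lemma d_nonneg: "0 \<le> d t" unfolding d_def by simp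

lemma blk_bound:
  assumes "t div q = s"
  shows "(\<Sum>i\<in>{t*l..<t*l+l}. ind v sg i) \<le> fr sg s * l + d t"
proof -
  have ct: "(\<Sum>i\<in>{t*l..<t*l+l}. ind v True i) = real (c t)"
    unfolding c_def by (simp add: cnt_sum)
  show ?thesis
  proof (cases sg)
    case True
    then show ?thesis using ct assms Lpos unfolding fr_def d_def by (simp add: field_simps)
  next
    case False
    have "(\<Sum>i\<in>{t*l..<t*l+l}. ind v False i) = real l - real (c t)"
      using ct by (simp add: ind_01 sum_subtractf)
    moreover have "(1 - real (C s)/L) * l = l - l*real (C s)/L" by (simp add: algebra_simps)
    moreover have "- (real (c t) - real l * real (C s) / real L) \<le> \<bar>real (c t) - real l * real (C s) / real L\<bar>"
      by (rule abs_ge_minus_self)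
    ultimately show ?thesis using False assms unfolding fr_def d_def by simp
  qed
qed

lemma cnt_interval:
  assumes "s*L \<le> lo" "lo \<le> hi" "hi < s*L + L"
  shows "real (cnt v sg {lo..hi}) \<le> fr sg s * (real hi + 1 - real lo) + 2*l + (\<Sum>t\<in>F lo hi. d t)"
proof -
  define a where "a = (lo+l-1) div l"
  define b where "b = (hi+1) div l"
  have a1: "lo \<le> a*l" and a2: "a*l < lo + l"
  proof -
    have "lo + l - 1 = a*l + (lo+l-1) mod l" unfolding a_def by simp
    moreover have "(lo+l-1) mod l < l" using lpos by simp
    ultimately show "lo \<le> a*l" "a*l < lo + l" using lpos by linarith+
  qed
  have b1: "b*l \<le> hi+1" and b2: "hi + 1 < b*l + l"
  proof -
    have "hi+1 = b*l + (hi+1) mod l" unfolding b_def by simp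
    moreover have "(hi+1) mod l < l" using lpos by simp
    ultimately show "b*l \<le> hi+1" "hi + 1 < b*l + l" by linarith+
  qed
  have cs: "real (cnt v sg {lo..hi}) = (\<Sum>i\<in>{lo..<hi+1}. ind v sg i)"
    by (simp add: cnt_sum atLeastLessThanSuc_atLeastAtMost)
  have Fn: "0 \<le> (\<Sum>t\<in>F lo hi. d t)" by (simp add: sum_nonneg d_nonneg)
  have frn: "0 \<le> fr sg s" by (rule fr_01)
  show ?thesis
  proof (cases "b \<le> a")
    case True
    then have "b*l \<le> a*l" by simp
    then have "hi + 1 - lo \<le> 2*l" using a2 b2 by linarith
    then have "(\<Sum>i\<in>{lo..<hi+1}. ind v sg i) \<le> 2*l"
      using sum_ind_le[of lo "hi+1" v sg] assms by linarith
    moreover have "0 \<le> fr sg s * (real hi + 1 - real lo)" using frn assms by simp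
    ultimately show ?thesis using cs Fn by linarith
  next
    case False
    then have ab: "a \<le> b" by simp
    then have albl: "a*l \<le> b*l" by simp
    have "(\<Sum>i\<in>{lo..<hi+1}. ind v sg i) = (\<Sum>i\<in>{lo..<a*l}. ind v sg i) + (\<Sum>i\<in>{a*l..<hi+1}. ind v sg i)"
      using a1 albl b1 by (intro sum.atLeastLessThan_concat[symmetric]) linarith+
    also have "(\<Sum>i\<in>{a*l..<hi+1}. ind v sg i) = (\<Sum>i\<in>{a*l..<b*l}. ind v sg i) + (\<Sum>i\<in>{b*l..<hi+1}. ind v sg i)"
      using albl b1 by (intro sum.atLeastLessThan_concat[symmetric]) linarith+
    finally have split: "(\<Sum>i\<in>{lo..<hi+1}. ind v sg i) = (\<Sum>i\<in>{lo..<a*l}. ind v sg i) + (\<Sum>i\<in>{a*l..<b*l}. ind v sg i) + (\<Sum>i\<in>{b*l..<hi+1}. ind v sg i)"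
      by simp
    have p1: "(\<Sum>i\<in>{lo..<a*l}. ind v sg i) \<le> l" using sum_ind_le[of lo "a*l" v sg] a1 a2 by linarith
    have p3: "(\<Sum>i\<in>{b*l..<hi+1}. ind v sg i) \<le> l" using sum_ind_le[of "b*l" "hi+1" v sg] b1 b2 by linarith
    have tdiv: "t div q = s" if "t \<in> {a..<b}" for t
    proof -
      have "a*l \<le> t*l" using that by simp
      have "s*q*l = s*L" using Lq by (simp add: mult.assoc)
      also have "\<dots> \<le> t*l" using assms(1) a1 \<open>a*l \<le> t*l\<close> by linarith
      finally have "s*q*l \<le> t*l" .
      then have "s*q \<le> t" using lpos by simp
      moreover have "(t+1)*l \<le> (s+1)*q*l"
      proof -
        have "t+1 \<le> b" using that by simp
        then have "(t+1)*l \<le> b*l" by (rule mult_le_mono1)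
        also have "\<dots> \<le> hi + 1" by (rule b1)
        also have "\<dots> \<le> (s+1)*q*l" using assms(3) Lq by (simp add: algebra_simps)
        finally show ?thesis .
      qed
      then have "t+1 \<le> (s+1)*q" using lpos mult_le_cancel2 by blast
      ultimately show ?thesis by (metis Suc_eq_plus1 add.commute div_nat_eqI less_eq_Suc_le mult.commute mult_Suc)
    qed
    have "(\<Sum>i\<in>{a*l..<b*l}. ind v sg i) = (\<Sum>t\<in>{a..<b}. \<Sum>i\<in>{t*l..<t*l+l}. ind v sg i)"
      by (rule sum_ivl_blocks[OF ab])
    also have "\<dots> \<le> (\<Sum>t\<in>{a..<b}. fr sg s * l + d t)"
      by (rule sum_mono) (use blk_bound tdiv in auto)
    also have "\<dots> = (real b - real a) * (fr sg s * l) + (\<Sum>t\<in>{a..<b}. d t)"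
      using ab by (simp add: sum.distrib of_nat_diff)
    also have "(real b - real a) * (fr sg s * l) = fr sg s * (real (b*l) - real (a*l))"
      by (simp add: algebra_simps)
    also have "\<dots> \<le> fr sg s * (real hi + 1 - real lo)"
    proof (intro mult_left_mono[OF _ frn])
      have "real lo \<le> real (a*l)" "real (b*l) \<le> real hi + 1" using a1 b1 by linarith+
      then show "real (b*l) - real (a*l) \<le> real hi + 1 - real lo" by linarith
    qed
    finally have p2: "(\<Sum>i\<in>{a*l..<b*l}. ind v sg i) \<le> fr sg s * (real hi + 1 - real lo) + (\<Sum>t\<in>F lo hi. d t)"
      unfolding F_def a_def b_def by simp
    show ?thesis using cs split p1 p2 p3 by linarith
  qed
qed

end



context core begin

abbreviation "N \<equiv> length v"
abbreviation "S \<equiv> set M"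

definition R where "R qq = {p\<in>S. snd p div r = qq}"
definition mm where "mm qq = card (R qq)"
definition P where "P qq = fst ` R qq"
definition I where "I qq = (if P qq = {} then {} else {Min (P qq)..Max (P qq)})"
definition FF where "FF qq = (if P qq = {} then {} else F (Min (P qq)) (Max (P qq)))"
definition E where "E qq = (\<Sum>t\<in>FF qq. d t)"
definition Q where "Q k = P (2*k) \<union> P (2*k+1)"
definition cross where "cross k = (Q k \<noteq> {} \<and> Min (Q k) div L \<noteq> Max (Q k) div L)"

lemma M_sorted: "sorted_wrt (\<lambda>p q. fst p < fst q \<and> snd p < snd q) M"
  and M_el: "\<And>i j. (i,j) \<in> S \<Longrightarrow> i < N \<and> j < n \<and> v!i = A r n ! j"
  using Mm unfolding matchings_def by (auto simp: A_def[of r n])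

lemma S_facts: "p \<in> S \<Longrightarrow> fst p < N \<and> snd p < n \<and> v!(fst p) = odd (snd p div r)"
  using M_el[of "fst p" "snd p"] by (auto simp: A_def)

lemma S_order:
  assumes "p \<in> S" "p' \<in> S"
  shows "p = p' \<or> (fst p < fst p' \<and> snd p < snd p') \<or> (fst p' < fst p \<and> snd p' < snd p)"
proof -
  obtain i where i: "i < length M" "p = M!i" using assms(1) by (auto simp: in_set_conv_nth)
  obtain j where j: "j < length M" "p' = M!j" using assms(2) by (auto simp: in_set_conv_nth)
  have srt: "\<And>a b. a < b \<Longrightarrow> b < length M \<Longrightarrow> fst (M!a) < fst (M!b) \<and> snd (M!a) < snd (M!b)"
    using M_sorted by (auto simp: sorted_wrt_iff_nth_less)
  show ?thesis
  proof (cases "i < j")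
    case True then show ?thesis using srt[of i j] i j by auto
  next
    case False
    then show ?thesis using srt[of j i] i j by (cases "i = j") auto
  qed
qed

lemma snd_mono: "p \<in> S \<Longrightarrow> p' \<in> S \<Longrightarrow> snd p < snd p' \<Longrightarrow> fst p < fst p'"
  using S_order by fastforce

lemma inj_fst: "inj_on fst S"
  by (rule inj_onI) (use S_order in fastforce)

lemma inj_snd: "inj_on snd S"
  by (rule inj_onI) (use S_order in fastforce)

lemma card_S: "card S = length M"
proof -
  have "distinct M"
  proof (subst distinct_conv_nth, intro allI impI)
    fix i j assume "i < length M" "j < length M" "i \<noteq> j"
    have srt: "\<And>a b. a < b \<Longrightarrow> b < length M \<Longrightarrow> fst (M!a) < fst (M!b)"
      using M_sorted by (auto simp: sorted_wrt_iff_nth_less)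
    show "M!i \<noteq> M!j"
    proof (cases "i < j")
      case True then show ?thesis using srt[of i j] \<open>j < length M\<close> by auto
    next
      case False then have "j < i" using \<open>i \<noteq> j\<close> by simp
      then show ?thesis using srt[of j i] \<open>i < length M\<close> by auto
    qed
  qed
  then show ?thesis by (rule distinct_card)
qed

lemma finite_R: "finite (R qq)" unfolding R_def by simp
lemma finite_P: "finite (P qq)" unfolding P_def using finite_R by simp

lemma mm_P: "mm qq = card (P qq)"
  unfolding mm_def P_def by (rule card_image[symmetric]) (rule inj_on_subset[OF inj_fst], auto simp: R_def)

lemma mm_r: "mm qq \<le> r"
proof -
  have "mm qq = card (snd ` R qq)"
    unfolding mm_def by (rule card_image[symmetric]) (rule inj_on_subset[OF inj_snd], auto simp: R_def)
  also have "\<dots> \<le> card {qq*r..<qq*r+r}"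
  proof (rule card_mono)
    show "snd ` R qq \<subseteq> {qq*r..<qq*r+r}"
    proof
      fix j assume "j \<in> snd ` R qq"
      then have "j div r = qq" by (auto simp: R_def)
      moreover have "j = j div r * r + j mod r" by simp
      moreover have "j mod r < r" using rpos by simp
      ultimately show "j \<in> {qq*r..<qq*r+r}" by auto
    qed
  qed simp
  finally show ?thesis by simp
qed

lemma P_I: "P qq \<subseteq> I qq"
  unfolding I_def using finite_P by (auto intro: Min_le Max_ge)

lemma finite_I: "finite (I qq)" unfolding I_def by simp

lemma mm_I: "mm qq \<le> card (I qq)"
  unfolding mm_P by (rule card_mono[OF finite_I P_I])

lemma mm_cnt: "mm qq \<le> cnt v (odd qq) (I qq)"
proof -
  have "P qq \<subseteq> {i\<in>I qq. v!i = odd qq}"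
    using P_I S_facts by (auto simp: P_def R_def)
  then show ?thesis unfolding mm_P cnt_def by (intro card_mono) (auto simp: finite_I)
qed

lemma P_order: "a \<in> P qq \<Longrightarrow> b \<in> P qq' \<Longrightarrow> qq < qq' \<Longrightarrow> a < b"
proof -
  assume "a \<in> P qq" "b \<in> P qq'" "qq < qq'"
  then obtain p p' where "p \<in> S" "p' \<in> S" "a = fst p" "b = fst p'" "snd p div r = qq" "snd p' div r = qq'"
    by (auto simp: P_def R_def)
  moreover have "snd p < snd p'"
    using \<open>qq < qq'\<close> calculation by (metis div_le_mono not_le)
  ultimately show "a < b" using snd_mono by blast
qed

lemma I_disj: "qq \<noteq> qq' \<Longrightarrow> I qq \<inter> I qq' = {}"
proof -
  have aux: "I qq \<inter> I qq' = {}" if "qq < qq'" for qq qq'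
  proof (cases "P qq = {} \<or> P qq' = {}")
    case True then show ?thesis by (auto simp: I_def)
  next
    case False
    then have "Max (P qq) < Min (P qq')"
      using P_order[OF Max_in[OF finite_P] Min_in[OF finite_P] that] by auto
    then show ?thesis using False by (auto simp: I_def)
  qed
  assume "qq \<noteq> qq'"
  then show ?thesis using aux[of qq qq'] aux[of qq' qq] by (cases "qq < qq'") auto
qed

lemma I_sub: "I qq \<subseteq> {..<N}"
proof (cases "P qq = {}")
  case False
  have "Max (P qq) \<in> P qq" using False finite_P by simp
  then have "Max (P qq) < N" using S_facts by (auto simp: P_def R_def)
  then show ?thesis using False by (auto simp: I_def)
qed (simp add: I_def)

lemma sum_I: "(\<Sum>qq\<in>AA. card (I qq)) \<le> N"
proof -
  have "(\<Sum>qq\<in>AA. card (I qq)) = card (\<Union>qq\<in>AA. I qq)" if "finite AA" for AA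
    using that by (subst card_UN_disjoint) (auto simp: finite_I I_disj)
  moreover have "card (\<Union>qq\<in>AA. I qq) \<le> N" if "finite AA" for AA
    using card_mono[of "{..<N}" "\<Union>qq\<in>AA. I qq"] I_sub by auto
  ultimately show ?thesis by (cases "finite AA") auto
qed

end


context core begin

lemma card_S_sum:
  assumes "n \<le> Kk * r"
  shows "card S = (\<Sum>qq<Kk. mm qq)"
proof -
  have "S = (\<Union>qq<Kk. R qq)"
  proof
    show "S \<subseteq> (\<Union>qq<Kk. R qq)"
    proof
      fix p assume "p \<in> S"
      then have "snd p < n" using S_facts by blast
      then have "snd p < Kk * r" using assms by linarith
      then have "snd p div r < Kk" by (rule less_mult_imp_div_less)
      then show "p \<in> (\<Union>qq<Kk. R qq)" using \<open>p \<in> S\<close> by (auto simp: R_def)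
    qed
  qed (auto simp: R_def)
  then have "card S = card (\<Union>qq<Kk. R qq)" by simp
  also have "\<dots> = (\<Sum>qq<Kk. card (R qq))"
    by (rule card_UN_disjoint) (auto simp: finite_R R_def)
  finally show ?thesis unfolding mm_def .
qed

lemma F_mem: "t \<in> F lo hi \<Longrightarrow> lo \<le> t*l \<and> t*l + l \<le> hi + 1"
proof -
  assume t: "t \<in> F lo hi"
  have a1: "lo + l - 1 = (lo+l-1) div l * l + (lo+l-1) mod l" by simp
  have a2: "(lo+l-1) mod l < l" using lpos by simp
  have "(lo+l-1) div l \<le> t" using t by (simp add: F_def)
  then have "(lo+l-1) div l * l \<le> t * l" by simp
  then have r1: "lo \<le> t*l" using a1 a2 lpos by linarith
  have "t + 1 \<le> (hi+1) div l" using t by (simp add: F_def)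
  then have h1: "(t+1)*l \<le> (hi+1) div l * l" by (rule mult_le_mono1)
  have h2: "(hi+1) div l * l \<le> hi+1" by simp
  have h3: "(t+1)*l = t*l + l" by simp
  have "t*l + l \<le> hi + 1" using h1 h2 h3 by linarith
  then show ?thesis using r1 by simp
qed

lemma N_l: "N = (N div l) * l"
proof -
  have "l dvd L" using Lq by simp
  then have "l dvd N" using LdvN by (rule dvd_trans)
  then show ?thesis by (rule dvd_div_mult_self[symmetric])
qed

lemma FF_sub: "t \<in> FF qq \<Longrightarrow> t*l \<in> I qq \<and> t < N div l"
proof -
  assume t: "t \<in> FF qq"
  then have ne: "P qq \<noteq> {}" by (auto simp: FF_def split: if_splits)
  have tF: "t \<in> F (Min (P qq)) (Max (P qq))" using t ne by (simp add: FF_def)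
  note fm = F_mem[OF tF]
  have r1: "t*l \<in> I qq" using fm ne lpos by (auto simp: I_def)
  have "Max (P qq) \<in> I qq" using ne finite_P by (simp add: I_def)
  then have "Max (P qq) < N" using I_sub by blast
  then have "(t+1)*l \<le> N" using fm by simp
  then have "(t+1)*l \<le> (N div l) * l" using N_l by linarith
  then have "t + 1 \<le> N div l" using lpos mult_le_cancel2 by blast
  then show ?thesis using r1 by simp
qed

lemma FF_disj: "qq \<noteq> qq' \<Longrightarrow> FF qq \<inter> FF qq' = {}"
proof (rule ccontr)
  assume "qq \<noteq> qq'" "FF qq \<inter> FF qq' \<noteq> {}"
  then obtain t where "t \<in> FF qq" "t \<in> FF qq'" by blast
  then have "t*l \<in> I qq \<inter> I qq'" using FF_sub by blast
  then show False using I_disj[OF \<open>qq \<noteq> qq'\<close>] by blast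
qed

lemma finite_FF: "finite (FF qq)" unfolding FF_def F_def by simp

lemma sum_E: "(\<Sum>qq\<in>AA. E qq) \<le> (\<Sum>t<N div l. d t)" if "finite AA"
proof -
  have "(\<Sum>qq\<in>AA. E qq) = (\<Sum>t\<in>(\<Union>qq\<in>AA. FF qq). d t)"
    unfolding E_def using that by (subst sum.UNION_disjoint) (auto simp: finite_FF FF_disj)
  also have "\<dots> \<le> (\<Sum>t<N div l. d t)"
    by (rule sum_mono2) (use FF_sub d_nonneg in auto)
  finally show ?thesis .
qed

lemma E_nonneg: "0 \<le> E qq" unfolding E_def by (simp add: sum_nonneg d_nonneg)

end

context core begin
lemma run_bound:
  assumes "P qq \<subseteq> X" "finite X" "X \<noteq> {}" "Min X div L = s" "Max X div L = s"
  shows "real (mm qq) \<le> fr (odd qq) s * card (I qq) + 2*l + E qq"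
proof (cases "P qq = {}")
  case True
  then have "mm qq = 0" by (simp add: mm_P)
  then show ?thesis using fr_01[of "odd qq" s] E_nonneg[of qq] by simp
next
  case False
  define lo where "lo = Min (P qq)"
  define hi where "hi = Max (P qq)"
  have "lo \<in> P qq" "hi \<in> P qq" using False finite_P lo_def hi_def by auto
  then have lo_in: "lo \<in> X" "hi \<in> X" using assms(1) by auto
  have "s*L \<le> Min X" using assms(4) by (metis div_times_less_eq_dividend)
  also have "Min X \<le> lo" using lo_in assms(2) by simp
  finally have slo: "s*L \<le> lo" .
  have lohi: "lo \<le> hi" unfolding lo_def hi_def using False finite_P by simp
  have "hi \<le> Max X" using lo_in assms(2) by simp
  moreover have "Max X < s*L + L"
    using assms(5) Lpos by (metis add.commute div_mult_mod_eq mod_less_divisor nat_add_left_cancel_less mult.commute)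
  ultimately have hiL: "hi < s*L + L" by simp
  have I: "I qq = {lo..hi}" using False by (simp add: I_def lo_def hi_def)
  have cI: "real (card (I qq)) = real hi + 1 - real lo" using I lohi by simp
  have EF: "E qq = (\<Sum>t\<in>F lo hi. d t)" using False by (simp add: E_def FF_def lo_def hi_def)
  have "real (mm qq) \<le> real (cnt v (odd qq) (I qq))" using mm_cnt by simp
  also have "\<dots> \<le> fr (odd qq) s * (real hi + 1 - real lo) + 2*l + (\<Sum>t\<in>F lo hi. d t)"
    unfolding I by (rule cnt_interval[OF slo lohi hiL])
  finally show ?thesis using cI EF by simp
qed

definition z where "z qq = 3 * real (mm qq) - real (card (I qq)) - real r"

lemma z_le: "z qq \<le> r"
  using mm_r[of qq] mm_I[of qq] unfolding z_def by linarith

lemma pair_bound: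
  "z (2*k) + z (2*k+1) \<le> 12*l + 3*(E (2*k) + E (2*k+1)) + (if cross k then 2*r else 0)"
proof (cases "cross k")
  case True
  then show ?thesis using z_le[of "2*k"] z_le[of "2*k+1"] E_nonneg[of "2*k"] E_nonneg[of "2*k+1"] by simp
next
  case False
  show ?thesis
  proof (cases "Q k = {}")
    case True
    then have "P (2*k) = {}" "P (2*k+1) = {}" by (auto simp: Q_def)
    then have "mm (2*k) = 0" "mm (2*k+1) = 0" "I (2*k) = {}" "I (2*k+1) = {}"
      by (auto simp: mm_P I_def)
    then show ?thesis using E_nonneg[of "2*k"] E_nonneg[of "2*k+1"] rpos by (simp add: z_def)
  next
    case ne: False
    define s where "s = Min (Q k) div L"
    have fQ: "finite (Q k)" by (simp add: Q_def finite_P)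
    have s2: "Max (Q k) div L = s" using False ne by (simp add: cross_def s_def)
    have b0: "real (mm (2*k)) \<le> fr False s * card (I (2*k)) + 2*l + E (2*k)"
      using run_bound[of "2*k" "Q k" s] fQ ne s2 s_def by (auto simp: Q_def)
    have b1: "real (mm (2*k+1)) \<le> fr True s * card (I (2*k+1)) + 2*l + E (2*k+1)"
      using run_bound[of "2*k+1" "Q k" s] fQ ne s2 s_def by (auto simp: Q_def)
    have frT: "fr True s = 1 - fr False s" by (simp add: fr_def)
    have "3 * real (mm (2*k)) - real (card (I (2*k))) - r + 3 * real (mm (2*k+1)) - real (card (I (2*k+1))) - r
          \<le> 3 * ((2*l + E (2*k)) + (2*l + E (2*k+1)))"
      by (rule pair_ineq2[of "fr False s"]) (use fr_01 mm_r b0 b1 frT E_nonneg in auto)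
    then show ?thesis using False unfolding z_def by simp
  qed
qed

lemma Q_order: "a \<in> Q k \<Longrightarrow> b \<in> Q k' \<Longrightarrow> k < k' \<Longrightarrow> a < b"
proof -
  assume a: "a \<in> Q k" and b: "b \<in> Q k'" and kk: "k < k'"
  have "\<exists>i. a \<in> P i \<and> i \<le> 2*k+1" using a unfolding Q_def by (auto intro: exI[of _ "2*k"] exI[of _ "2*k+1"])
  then obtain i where i: "a \<in> P i" "i \<le> 2*k+1" by blast
  have "\<exists>j. b \<in> P j \<and> 2*k' \<le> j" using b unfolding Q_def by (auto intro: exI[of _ "2*k'"] exI[of _ "2*k'+1"])
  then obtain j where j: "b \<in> P j" "2*k' \<le> j" by blast
  have "i < j" using i(2) j(2) kk by linarith
  then show "a < b" using P_order[OF i(1) j(1)] by blast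
qed

lemma cross_card: "card {k\<in>{..<K}. cross k} \<le> N div L"
proof -
  let ?f = "\<lambda>k. Max (Q k) div L"
  have fQ: "finite (Q k)" for k by (simp add: Q_def finite_P)
  have key: "?f k < ?f k'" if "cross k" "cross k'" "k < k'" for k k'
  proof -
    have ne: "Q k \<noteq> {}" "Q k' \<noteq> {}" using that cross_def by auto
    have "Max (Q k) < Min (Q k')" using Q_order[OF Max_in[OF fQ ne(1)] Min_in[OF fQ ne(2)] that(3)] .
    then have "Max (Q k) div L \<le> Min (Q k') div L" by (simp add: div_le_mono)
    moreover have "Min (Q k') div L \<le> Max (Q k') div L" using fQ ne by (simp add: div_le_mono)
    moreover have "Min (Q k') div L \<noteq> Max (Q k') div L" using that(2) cross_def by auto
    ultimately show ?thesis by simp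
  qed
  have inj: "inj_on ?f {k\<in>{..<K}. cross k}"
  proof (rule inj_onI)
    fix k k' assume "k \<in> {k\<in>{..<K}. cross k}" "k' \<in> {k\<in>{..<K}. cross k}" "?f k = ?f k'"
    then show "k = k'" using key[of k k'] key[of k' k] by (cases "k < k'") (auto simp: not_less_iff_gr_or_eq)
  qed
  have img: "?f ` {k\<in>{..<K}. cross k} \<subseteq> {..<N div L}"
  proof
    fix x assume "x \<in> ?f ` {k\<in>{..<K}. cross k}"
    then obtain k where k: "cross k" "x = ?f k" by auto
    then have ne: "Q k \<noteq> {}" by (simp add: cross_def)
    have "Max (Q k) \<in> Q k" using fQ ne by simp
    then have "Max (Q k) < N" using I_sub P_I unfolding Q_def by blast
    moreover have "N = (N div L) * L" using LdvN by simp
    ultimately have "Max (Q k) < (N div L) * L" by simp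
    then show "x \<in> {..<N div L}" using k less_mult_imp_div_less by auto
  qed
  show ?thesis using card_inj_on_le[OF inj img] by simp
qed

end

context core begin

lemma sum_pairs: "(\<Sum>qq<K*2. g qq) = (\<Sum>k<K. g (2*k) + g (2*k+1))" for g :: "nat \<Rightarrow> real"
  unfolding sum_blocks[of g K 2] by (simp add: numeral_2_eq_2 mult.commute)

theorem core_bound:
  "3*real (length M) - real N - real n \<le> 3*(\<Sum>t<N div l. d t) + 12*real l*real (n div (2*r) + 1)
     + 2*real r*real (N div L) + 2*real r"
proof -
  define K where "K = n div (2*r) + 1"
  have n1: "n = n div (2*r) * (2*r) + n mod (2*r)" by (rule div_mult_mod_eq[symmetric])
  have n2: "n mod (2*r) < 2*r" using rpos by simp
  have nK: "n \<le> K*2*r" using n1 n2 unfolding K_def by (simp add: algebra_simps)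
  have nK2: "real (K*2*r) \<le> real n + 2*r"
  proof -
    have "K*2*r = n div (2*r) * (2*r) + 2*r" unfolding K_def by (simp add: algebra_simps)
    then have "K*2*r \<le> n + 2*r" using n1 by linarith
    then show ?thesis by linarith
  qed
  have lm: "length M = (\<Sum>qq<K*2. mm qq)" using card_S card_S_sum[of "K*2"] nK by (simp add: mult.assoc)
  have sI: "(\<Sum>qq<K*2. real (card (I qq))) \<le> real N"
    using sum_I[of "{..<K*2}"] by (metis of_nat_le_iff of_nat_sum)
  have zs: "(\<Sum>qq<K*2. z qq) = 3*(\<Sum>qq<K*2. real (mm qq)) - (\<Sum>qq<K*2. real (card (I qq))) - real (K*2*r)"
    unfolding z_def by (simp add: sum_subtractf sum_distrib_left)
  have lm': "real (length M) = (\<Sum>qq<K*2. real (mm qq))" using lm by simp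
  have step1: "3*real (length M) - real N - real n \<le> (\<Sum>qq<K*2. z qq) + 2*r"
    using zs lm' sI nK2 by linarith
  have "(\<Sum>qq<K*2. z qq) = (\<Sum>k<K. z (2*k) + z (2*k+1))" by (rule sum_pairs)
  also have "\<dots> \<le> (\<Sum>k<K. 12*real l + 3*(E (2*k) + E (2*k+1)) + (if cross k then 2*real r else 0))"
  proof (rule sum_mono)
    fix k
    have pb: "z (2*k) + z (2*k+1) \<le> 12*l + 3*(E (2*k) + E (2*k+1)) + (if cross k then 2*r else 0)"
      by (rule pair_bound)
    show "z (2*k) + z (2*k+1) \<le> 12*real l + 3*(E (2*k) + E (2*k+1)) + (if cross k then 2*real r else 0)"
    proof (cases "cross k")
      case True then show ?thesis using pb by simp
    next
      case False then show ?thesis using pb by simp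
    qed
  qed
  also have "\<dots> = 12*real l*K + 3*(\<Sum>k<K. E (2*k) + E (2*k+1)) + (\<Sum>k<K. if cross k then 2*real r else 0)"
    by (simp add: sum.distrib sum_distrib_left)
  also have "(\<Sum>k<K. E (2*k) + E (2*k+1)) = (\<Sum>qq<K*2. E qq)" by (rule sum_pairs[symmetric])
  also have "(\<Sum>k<K. if cross k then 2*real r else 0) = real (card {k\<in>{..<K}. cross k}) * (2*real r)"
    by (simp add: sum.If_cases Int_def conj_commute)
  finally have step2: "(\<Sum>qq<K*2. z qq) \<le> 12*real l*K + 3*(\<Sum>qq<K*2. E qq) + real (card {k\<in>{..<K}. cross k}) * (2*real r)" .
  have e: "(\<Sum>qq<K*2. E qq) \<le> (\<Sum>t<N div l. d t)" by (rule sum_E) simp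
  have c: "real (card {k\<in>{..<K}. cross k}) * (2*real r) \<le> 2*real r*real (N div L)"
  proof -
    have "real (card {k\<in>{..<K}. cross k}) \<le> real (N div L)" using cross_card[of K] by linarith
    then show ?thesis by (simp add: mult.commute mult_left_mono)
  qed
  show ?thesis using step1 step2 e c unfolding K_def by linarith
qed

end


lemma cs_ineq:
  fixes x :: "nat \<Rightarrow> real"
  shows "(\<Sum>t<T. \<bar>x t\<bar>)^2 \<le> real T * (\<Sum>t<T. (x t)^2)"
proof (cases "T = 0")
  case True then show ?thesis by simp
next
  case False
  define a where "a = (\<Sum>t<T. \<bar>x t\<bar>) / T"
  have Tn: "real T \<noteq> 0" using False by simp
  have "0 \<le> (\<Sum>t<T. (\<bar>x t\<bar> - a)^2)" by (simp add: sum_nonneg)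
  also have "\<dots> = (\<Sum>t<T. (x t)^2) - 2*a*(\<Sum>t<T. \<bar>x t\<bar>) + T*a^2"
    by (simp add: power2_eq_square algebra_simps sum.distrib sum_subtractf sum_distrib_left)
  also have "2*a*(\<Sum>t<T. \<bar>x t\<bar>) = 2*T*a^2" unfolding a_def using Tn by (simp add: power2_eq_square)
  finally have "T*a^2 \<le> (\<Sum>t<T. (x t)^2)" by simp
  then have "T * (T*a^2) \<le> T * (\<Sum>t<T. (x t)^2)" by (simp add: mult_left_mono)
  moreover have "T * (T*a^2) = (\<Sum>t<T. \<bar>x t\<bar>)^2" unfolding a_def using Tn by (simp add: power2_eq_square)
  ultimately show ?thesis by simp
qed

lemma sorted_wrt_irrefl_distinct:
  "(\<And>x. \<not> P x x) \<Longrightarrow> sorted_wrt P xs \<Longrightarrow> distinct xs"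
  by (induction xs) auto

lemma matchings_finite: "finite (matchings a b)"
proof (rule finite_subset)
  show "matchings a b \<subseteq> {xs. set xs \<subseteq> {..<length a} \<times> {..<length b} \<and> distinct xs}"
    unfolding matchings_def by (auto intro: sorted_wrt_irrefl_distinct[rotated])
  show "finite {xs. set xs \<subseteq> {..<length a} \<times> {..<length b} \<and> distinct xs}"
    by (rule finite_subset_distinct) simp
qed

lemma matchings_ne: "[] \<in> matchings a b" unfolding matchings_def by simp

lemma adv_attained: "\<exists>M\<in>matchings a b. adv a b = adv_M M a b"
proof -
  have "adv a b \<in> (\<lambda>M. adv_M M a b) ` matchings a b"
    unfolding adv_def by (rule Max_in) (use matchings_finite matchings_ne[of a b] in auto)
  then show ?thesis by auto
qed

lemma adv_empty: "adv [] b = 0"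
proof -
  have "(\<lambda>M. adv_M M [] b) ` matchings [] b = {0}"
    using matchings_ne[of "[]" b] by (auto simp: adv_M_def)
  then show ?thesis unfolding adv_def by simp
qed

lemma block_bias:
  assumes "L = q*m" "0 < m" "0 < q" "(s+1)*L \<le> length v"
  shows "bias (blk L v s) = (\<Sum>u<q. bias (blk m v (s*q+u))) / q"
proof -
  have Lpos: "0 < L" using assms by simp
  have sL: "s*L + L \<le> length v" using assms(4) by (simp add: algebra_simps)
  have bL: "bias (blk L v s) = (2 * real (cnt v True {s*L..<s*L+L}) - L) / L"
    unfolding blk_def by (rule bias_take_drop[OF sL Lpos])
  have bm: "bias (blk m v (s*q+u)) = (2 * real (cnt v True {(s*q+u)*m..<(s*q+u)*m+m}) - m) / m" if "u < q" for u
  proof -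
    have "(s*q+u+1)*m \<le> (s*q+q)*m" using that by (intro mult_le_mono1) simp
    also have "\<dots> = (s+1)*L" using assms(1) by (simp add: algebra_simps)
    finally have "(s*q+u)*m + m \<le> length v" using assms(4) by (simp add: algebra_simps)
    then show ?thesis unfolding blk_def by (rule bias_take_drop[OF _ assms(2)])
  qed
  have Csum: "real (cnt v True {s*L..<s*L+L}) = (\<Sum>u<q. real (cnt v True {(s*q+u)*m..<(s*q+u)*m+m}))"
  proof -
    have e: "{s*L..<s*L+L} = {(s*q)*m..<(s*q+q)*m}" using assms(1) by (simp add: algebra_simps)
    have "real (cnt v True {s*L..<s*L+L}) = (\<Sum>i\<in>{(s*q)*m..<(s*q+q)*m}. ind v True i)"
      unfolding e by (simp add: cnt_sum)
    also have "\<dots> = (\<Sum>t\<in>{s*q..<s*q+q}. \<Sum>i\<in>{t*m..<t*m+m}. ind v True i)"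
      by (rule sum_ivl_blocks) simp
    also have "\<dots> = (\<Sum>u<q. \<Sum>i\<in>{(s*q+u)*m..<(s*q+u)*m+m}. ind v True i)"
      using sum.shift_bounds_nat_ivl[of "\<lambda>t. \<Sum>i\<in>{t*m..<t*m+m}. ind v True i" 0 "s*q" q]
      by (simp add: atLeast0LessThan add.commute)
    also have "\<dots> = (\<Sum>u<q. real (cnt v True {(s*q+u)*m..<(s*q+u)*m+m}))"
      by (simp add: cnt_sum)
    finally show ?thesis .
  qed
  have "(\<Sum>u<q. bias (blk m v (s*q+u))) = (\<Sum>u<q. (2 * real (cnt v True {(s*q+u)*m..<(s*q+u)*m+m}) - m) / m)"
    by (rule sum.cong) (auto simp: bm)
  also have "\<dots> = (2 * real (cnt v True {s*L..<s*L+L}) - q*m) / m"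
    unfolding Csum using assms(2) by (simp add: sum_divide_distrib[symmetric] sum_subtractf sum_distrib_left)
  finally have h: "(\<Sum>u<q. bias (blk m v (s*q+u))) / q = (2 * real (cnt v True {s*L..<s*L+L}) - q*m) / (m*q)"
    by (simp add: divide_divide_eq_left)
  show ?thesis unfolding bL h using assms(1) by (simp add: mult.commute)
qed



context core begin

lemma len_M: "length M \<le> N"
proof -
  have "length M = card (fst ` S)" using card_S card_image[OF inj_fst] by simp
  also have "\<dots> \<le> card {..<N}" by (rule card_mono) (use S_facts in auto)
  finally show ?thesis by simp
qed

lemma bias_diff:
  assumes "t < N div l"
  shows "\<bar>bias (blk l v t) - bias (blk L v (t div q))\<bar> = 2 / l * d t"
proof -
  have "t + 1 \<le> N div l" using assms by simp
  then have "(t+1)*l \<le> (N div l)*l" by (rule mult_le_mono1)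
  then have tl: "t*l + l \<le> N" using N_l by (simp add: algebra_simps)
  have NL: "N = (N div L) * L" using LdvN by simp
  have "N div l = (N div L) * q"
  proof -
    have "N = ((N div L) * q) * l" using NL Lq by (simp add: mult.assoc)
    then show ?thesis using lpos by (metis nonzero_mult_div_cancel_right not_less0 zero_less_iff_neq_zero)
  qed
  then have "t div q < N div L" using assms qpos by (simp add: less_mult_imp_div_less)
  then have "t div q + 1 \<le> N div L" by simp
  then have "(t div q + 1)*L \<le> (N div L)*L" by (rule mult_le_mono1)
  then have sL: "(t div q)*L + L \<le> N" using NL by (simp add: algebra_simps)
  have b1: "bias (blk l v t) = (2 * real (c t) - l) / l"
    unfolding blk_def c_def by (rule bias_take_drop[OF tl lpos])
  have b2: "bias (blk L v (t div q)) = (2 * real (C (t div q)) - L) / L"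
    unfolding blk_def C_def by (rule bias_take_drop[OF sL Lpos])
  have "bias (blk l v t) - bias (blk L v (t div q)) = 2 / l * (real (c t) - real l * real (C (t div q)) / real L)"
    unfolding b1 b2 using lpos Lpos by (simp add: field_simps)
  then have "\<bar>bias (blk l v t) - bias (blk L v (t div q))\<bar> = \<bar>2 / l\<bar> * \<bar>real (c t) - real l * real (C (t div q)) / real L\<bar>"
    by (simp only: abs_mult)
  then show ?thesis unfolding d_def by simp
qed

end



lemma D_bound:
  fixes e N Z D m nd rr L TL :: real
  assumes e: "0 < e" "e < 1/200" and N: "0 < N" and rr: "0 < rr" and L: "0 < L"
    and Z1: "e*N/2 \<le> Z" and Z2: "Z \<le> 3*D + 12*m*(nd+1) + 2*rr*TL + 2*rr"
    and nd: "nd \<le> N/rr" and m: "m = e^2*rr" and rrL: "rr \<le> e^2*L" and LN: "L \<le> N" and TL: "TL = N/L"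
  shows "e*N/8 \<le> D"
proof -
  have "e*e \<le> (1/200)*(1/200)" by (rule mult_mono) (use e in auto)
  then have e2: "e^2 \<le> 1/40000" by (simp add: power2_eq_square)
  have "rr*nd \<le> N" using nd rr by (simp add: pos_le_divide_eq mult.commute)
  then have "e^2*(rr*nd) \<le> e^2*N" by (rule mult_left_mono) simp
  moreover have "m*(nd+1) = e^2*(rr*nd) + e^2*rr" unfolding m by (simp add: algebra_simps)
  ultimately have h1: "m*(nd+1) \<le> e^2*N + e^2*rr" by linarith
  have "e^2*L \<le> e^2*N" using LN by (rule mult_left_mono) simp
  then have h3: "rr \<le> e^2*N" using rrL by linarith
  have "rr/L \<le> e^2" using rrL L by (simp add: pos_divide_le_eq)
  then have "rr/L*N \<le> e^2*N" using N by (intro mult_right_mono) auto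
  moreover have "rr*TL = rr/L*N" unfolding TL by simp
  ultimately have h2: "rr*TL \<le> e^2*N" by linarith
  have h4: "e^2*rr \<le> e^2*N/40000"
  proof -
    have "e^2*rr \<le> e^2*(e^2*N)" using h3 by (intro mult_left_mono) auto
    also have "\<dots> \<le> (1/40000)*(e^2*N)" using e2 N by (intro mult_right_mono) simp_all
    finally show ?thesis by simp
  qed
  have "e*N/2 \<le> 3*D + 12*(e^2*N) + 12*(e^2*N/40000) + 2*(e^2*N) + 2*(e^2*N)"
    using Z1 Z2 h1 h2 h3 h4 by linarith
  moreover have "0 \<le> e^2*N" using N by simp
  ultimately have "e*N/2 - 17*(e^2*N) \<le> 3*D" by linarith
  moreover have "17*(e^2*N) \<le> e*N/8"
  proof -
    have "e^2*N = e*(e*N)" by (simp add: power2_eq_square)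
    also have "\<dots> \<le> (1/200)*(e*N)" using e N by (intro mult_right_mono) auto
    finally have "e^2*N \<le> (1/200)*(e*N)" .
    moreover have "0 \<le> e^2*N" using N by simp
    ultimately show ?thesis by linarith
  qed
  ultimately show ?thesis by linarith
qed



lemma W_bound:
  fixes X Y e TQ :: real
  assumes "0 < e" "e < 1/200" "0 < TQ" "e*TQ/4 \<le> X" "X^2 \<le> TQ * Y"
  shows "e^3/1200 \<le> Y / TQ"
proof -
  have X0: "0 \<le> e*TQ/4" using assms by simp
  have "(e*TQ/4)^2 \<le> X^2" using assms(4) X0 by (intro power_mono) auto
  then have "(e*TQ/4)^2 \<le> TQ*Y" using assms(5) by linarith
  then have "e^2*TQ*TQ/16 \<le> TQ*Y" by (simp add: power2_eq_square algebra_simps)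
  then have "e^2*TQ/16 \<le> Y" using assms(3) by (simp add: field_simps power2_eq_square)
  then have y: "e^2/16 \<le> Y/TQ" using assms(3) by (simp add: field_simps)
  have "e^3 = e*e^2" by (simp add: power3_eq_cube power2_eq_square)
  also have "\<dots> \<le> 1 * e^2" using assms(2) by (intro mult_right_mono) auto
  finally have "e^3 \<le> e^2" by simp
  moreover have "0 \<le> e^2" by simp
  ultimately have "e^3/1200 \<le> e^2/16" by linarith
  then show ?thesis using y by linarith
qed

theorem lemma3p3:
  shows "\<exists>\<epsilon>0>0. \<forall>(\<epsilon>::real) (n::nat) (v::bool list) (k::nat) (r::nat \<Rightarrow> nat) (l::nat \<Rightarrow> nat).
     0 < \<epsilon> \<and> \<epsilon> < \<epsilon>0 \<and> 0 < n
     \<and> (\<forall>j\<in>{1..k}. 0 < r j)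
     \<and> (\<forall>j\<in>{1..<k}. r (Suc j) < r j \<and> real (r j) \<ge> real (r (Suc j)) / \<epsilon> ^ 4)
     \<and> (\<forall>j\<in>{1..k}. real (l j) = \<epsilon>\<^sup>2 * real (r j))
     \<and> l 1 dvd length v
     \<and> (\<forall>j\<in>{1..<k}. l (Suc j) dvd l j)
     \<and> (\<forall>j\<in>{1..k}. adv v (A (r j) n) \<ge> \<epsilon> / 2)
     \<longrightarrow> (\<forall>i. 1 \<le> i \<and> i < k \<longrightarrow>
           measure_pmf.variance (vdist l v (Suc i)) bias
             \<ge> measure_pmf.variance (vdist l v i) bias + \<epsilon> ^ 3 / 1200)"
proof (rule exI[of _ "1/200"], intro conjI allI impI)
  show "(0::real) < 1/200" by simp
next
  fix \<epsilon> :: real and n :: nat and v :: "bool list" and k :: nat and r l :: "nat \<Rightarrow> nat" and i :: nat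
  assume H: "0 < \<epsilon> \<and> \<epsilon> < 1/200 \<and> 0 < n
     \<and> (\<forall>j\<in>{1..k}. 0 < r j)
     \<and> (\<forall>j\<in>{1..<k}. r (Suc j) < r j \<and> real (r j) \<ge> real (r (Suc j)) / \<epsilon> ^ 4)
     \<and> (\<forall>j\<in>{1..k}. real (l j) = \<epsilon>\<^sup>2 * real (r j))
     \<and> l 1 dvd length v
     \<and> (\<forall>j\<in>{1..<k}. l (Suc j) dvd l j)
     \<and> (\<forall>j\<in>{1..k}. adv v (A (r j) n) \<ge> \<epsilon> / 2)"
    and Hi: "1 \<le> i \<and> i < k"
  have ep: "0 < \<epsilon>" and es: "\<epsilon> < 1/200" and rpos: "\<forall>j\<in>{1..k}. 0 < r j"
    and rdec: "\<forall>j\<in>{1..<k}. r (Suc j) < r j \<and> real (r j) \<ge> real (r (Suc j)) / \<epsilon> ^ 4"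
    and lr: "\<forall>j\<in>{1..k}. real (l j) = \<epsilon>\<^sup>2 * real (r j)" and l1: "l 1 dvd length v"
    and ld: "\<forall>j\<in>{1..<k}. l (Suc j) dvd l j" and ad: "\<forall>j\<in>{1..k}. adv v (A (r j) n) \<ge> \<epsilon> / 2"
    using H by blast+
  have i1: "1 \<le> i" "i < k" using Hi by auto
  have lpos: "\<forall>j\<in>{1..k}. 0 < l j"
  proof
    fix j assume j: "j \<in> {1..k}"
    then have "0 < \<epsilon>\<^sup>2 * real (r j)" using rpos ep by simp
    then show "0 < l j" using lr j by (metis of_nat_0_less_iff)
  qed
  have advi: "\<epsilon>/2 \<le> adv v (A (r (Suc i)) n)" using ad i1 by simp
  have vpos: "0 < length v"
  proof (rule ccontr)
    assume "\<not> 0 < length v"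
    then have "v = []" by simp
    then show False using advi adv_empty ep by simp
  qed
  define L where "L = l i"
  define m where "m = l (Suc i)"
  define rr where "rr = r (Suc i)"
  define N where "N = length v"
  have VSi: "vdist l v i = map_pmf (blk L v) (pmf_of_set {..<N div L}) \<and> L dvd N"
    unfolding L_def N_def by (rule vdist_struct[OF lpos l1 ld]) (use i1 vpos in auto)
  have VSi1: "vdist l v (Suc i) = map_pmf (blk m v) (pmf_of_set {..<N div m})"
    unfolding m_def N_def using vdist_struct[OF lpos l1 ld, of "Suc i"] i1 vpos by auto
  have mL: "m dvd L" unfolding m_def L_def using ld i1 by auto
  have mpos: "0 < m" unfolding m_def using lpos i1 by auto
  have Lpos: "0 < L" unfolding L_def using lpos i1 by auto
  have rrpos: "0 < rr" unfolding rr_def using rpos i1 by auto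
  define q where "q = L div m"
  have Lq: "L = q*m" unfolding q_def using mL by simp
  have qpos: "0 < q" using Lq Lpos by (cases q) auto
  define T where "T = N div L"
  have LN: "L dvd N" using VSi by simp
  have NT: "N = T*L" unfolding T_def using LN by simp
  have Tpos: "0 < T" using NT vpos N_def by (cases T) auto
  have NmTq: "N div m = T*q" using NT Lq mpos by (simp add: mult.assoc)
  obtain M where Mm: "M \<in> matchings v (A rr n)" and Madv: "adv v (A rr n) = adv_M M v (A rr n)"
    using adv_attained by blast
  interpret core v rr n m L q M
    by unfold_locales (use mpos rrpos Lq qpos LN Mm N_def in auto)
  define \<beta> where "\<beta> t = bias (blk m v t)" for t
  define \<mu> where "\<mu> s = (\<Sum>u<q. \<beta> (s*q+u)) / q" for s
  have \<mu>b: "\<mu> s = bias (blk L v s)" if "s < T" for s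
  proof -
    have "(s+1)*L \<le> T*L" using that by (intro mult_le_mono1) simp
    then have "(s+1)*L \<le> length v" using NT N_def by simp
    then show ?thesis unfolding \<mu>_def \<beta>_def by (rule block_bias[OF Lq mpos qpos, symmetric])
  qed
  have Vi: "measure_pmf.variance (vdist l v i) bias
      = (\<Sum>s<T. (\<mu> s - (\<Sum>s<T. \<mu> s) / T)^2) / T"
  proof -
    have "measure_pmf.variance (vdist l v i) bias = (\<Sum>t<T. (bias (blk L v t) - (\<Sum>t<T. bias (blk L v t)) / T)^2) / T"
      using VSi var_uniform[OF Tpos, of "blk L v" bias] unfolding T_def by simp
    also have "(\<Sum>t<T. bias (blk L v t)) = (\<Sum>s<T. \<mu> s)" by (rule sum.cong) (auto simp: \<mu>b)
    also have "(\<Sum>t<T. (bias (blk L v t) - (\<Sum>s<T. \<mu> s) / T)^2) = (\<Sum>s<T. (\<mu> s - (\<Sum>s<T. \<mu> s) / T)^2)"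
      by (rule sum.cong) (auto simp: \<mu>b)
    finally show ?thesis .
  qed
  have TQpos: "0 < T*q" using Tpos qpos by simp
  have Vi1: "measure_pmf.variance (vdist l v (Suc i)) bias
      = (\<Sum>t<T*q. (\<beta> t - (\<Sum>t<T*q. \<beta> t)/(T*q))^2)/(T*q)"
    using VSi1 var_uniform[OF TQpos, of "blk m v" bias] unfolding NmTq \<beta>_def by simp
  define W where "W = (\<Sum>t<T*q. (\<beta> t - \<mu> (t div q))^2)/(T*q)"
  have dec: "measure_pmf.variance (vdist l v (Suc i)) bias = measure_pmf.variance (vdist l v i) bias + W"
    unfolding Vi1 Vi W_def \<mu>_def by (rule var_decomp[OF Tpos qpos])
  define D where "D = (\<Sum>t<N div m. d t)"
  have X: "(\<Sum>t<T*q. \<bar>\<beta> t - \<mu> (t div q)\<bar>) = 2 / m * D"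
  proof -
    have "(\<Sum>t<T*q. \<bar>\<beta> t - \<mu> (t div q)\<bar>) = (\<Sum>t<T*q. 2 / m * d t)"
    proof (rule sum.cong[OF refl])
      fix t assume "t \<in> {..<T*q}"
      then have t: "t < T*q" by simp
      then have "t div q < T" using qpos by (simp add: less_mult_imp_div_less)
      then have "\<mu> (t div q) = bias (blk L v (t div q))" by (rule \<mu>b)
      moreover have "t < length v div m" using t NmTq N_def by simp
      ultimately show "\<bar>\<beta> t - \<mu> (t div q)\<bar> = 2 / m * d t"
        unfolding \<beta>_def using bias_diff by simp
    qed
    also have "\<dots> = 2 / m * D" unfolding D_def NmTq by (simp add: sum_distrib_left)
    finally show ?thesis .
  qed
  have cb: "3*real (length M) - real N - real n \<le> 3*D + 12*real m*real (n div (2*rr) + 1)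
     + 2*real rr*real (N div L) + 2*real rr"
    using core_bound unfolding D_def N_def by simp
  have Npos: "0 < real N" using vpos N_def by simp
  have Z1: "\<epsilon>*N/2 \<le> 3*real (length M) - real N - real n"
  proof -
    have "\<epsilon>/2 \<le> adv_M M v (A rr n)" using advi Madv rr_def by simp
    also have "adv_M M v (A rr n) = (3*real (length M) - real N - real n) / N"
      unfolding adv_M_def N_def by (simp add: A_def)
    finally show ?thesis using Npos by (simp add: field_simps)
  qed
  have n2N: "real n \<le> 2*real N"
  proof -
    have "real (length M) \<le> real N" using len_M N_def by simp
    moreover have "0 \<le> \<epsilon>*N/2" using ep Npos by simp
    ultimately show ?thesis using Z1 by linarith
  qed
  have nd: "real (n div (2*rr)) \<le> real N / real rr"
  proof -
    have "real (n div (2*rr)) \<le> real n / real (2*rr)" by (rule of_nat_div_le_of_nat)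
    also have "\<dots> \<le> (2*real N) / real (2*rr)" using n2N rrpos by (intro divide_right_mono) auto
    finally show ?thesis using rrpos by simp
  qed
  have mr: "real m = \<epsilon>^2*real rr" using lr i1 unfolding m_def rr_def by simp
  have rrL: "real rr \<le> \<epsilon>^2*real L"
  proof -
    have h: "real rr / \<epsilon>^4 \<le> real (r i)" using rdec i1 unfolding rr_def by simp
    have e4: "0 < \<epsilon>^4" using ep by simp
    have "real rr \<le> \<epsilon>^4 * real (r i)" using h e4 by (simp add: pos_divide_le_eq mult.commute)
    also have "\<dots> = \<epsilon>^2 * (\<epsilon>^2 * real (r i))" by (simp add: power_add[symmetric])
    also have "\<epsilon>^2 * real (r i) = real L" using lr i1 unfolding L_def by simp
    finally show ?thesis .
  qed
  have "L \<le> T*L" using Tpos by simp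
  then have "L \<le> N" using NT by simp
  then have LleN: "real L \<le> real N" by simp
  have TL: "real (N div L) = real N / real L" using LN by (simp add: real_of_nat_div)
  have Dge: "\<epsilon>*N/8 \<le> D"
    by (rule D_bound[OF ep es Npos _ _ Z1 cb[unfolded of_nat_add of_nat_1] nd mr rrL LleN TL])
       (use rrpos Lpos in auto)
  have Xge: "\<epsilon>*real (T*q)/4 \<le> (\<Sum>t<T*q. \<bar>\<beta> t - \<mu> (t div q)\<bar>)"
  proof -
    have "real N = real (T*q) * real m" using NT Lq by (simp add: mult.assoc)
    then have "\<epsilon>*real (T*q)/4 = 2/m * (\<epsilon>*N/8)" using mpos by (simp add: field_simps)
    also have "\<dots> \<le> 2/m * D" using Dge mpos by (intro mult_left_mono) auto
    finally show ?thesis using X by simp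
  qed
  have cs: "(\<Sum>t<T*q. \<bar>\<beta> t - \<mu> (t div q)\<bar>)^2 \<le> real (T*q) * (\<Sum>t<T*q. (\<beta> t - \<mu> (t div q))^2)"
    by (rule cs_ineq)
  have "\<epsilon>^3/1200 \<le> (\<Sum>t<T*q. (\<beta> t - \<mu> (t div q))^2) / real (T*q)"
    by (rule W_bound[OF ep es _ Xge cs]) (use TQpos in simp)
  then have "\<epsilon>^3/1200 \<le> W" unfolding W_def by simp
  then show "measure_pmf.variance (vdist l v (Suc i)) bias
             \<ge> measure_pmf.variance (vdist l v i) bias + \<epsilon> ^ 3 / 1200"
    using dec by simp
qed


end
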